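(* Let $G$ be a finite $p$-group with Frattini subgroup $\Phi(G)$, let $d\ge 1$ and let $w\in F_d$ be a word whose word map $\tilde w:G^d\to G$ is not surjective. Then $w(G)\subseteq \Phi(G)$.
   Context: $F_d$ is the free group on $d$ letters. For $w\in F_d$ and a group $G$, the word map $\tilde w:G^d\to G$ is evaluation of $w$ on $d$-tuples, and $w(G)$ denotes its image. *)

theory Defs
  imports "HOL-Algebra.Algebra"
begin

text \<open>Elements of the free group F_d are represented by (not necessarily reduced)
  words: lists of letters (i, b) with i < d, where (i, True) stands for the
  generator x_i and (i, False) for its inverse. Every element of F_d is
  represented, and evaluation respects free reduction, so word maps and their
  images are exactly those of the free group elements.\<close>

definition free_words :: "nat \<Rightarrow> (nat \<times> bool) list set" where
  "free_words d = {w. \<forall>x\<in>set w. fst x < d}"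

fun word_eval :: "('a, 'b) monoid_scheme \<Rightarrow> (nat \<times> bool) list \<Rightarrow> (nat \<Rightarrow> 'a) \<Rightarrow> 'a" where
  "word_eval G [] g = \<one>\<^bsub>G\<^esub>"
| "word_eval G ((i, b) # w) g =
     (if b then g i else inv\<^bsub>G\<^esub> (g i)) \<otimes>\<^bsub>G\<^esub> word_eval G w g"

text \<open>Tuples in G^d are functions g with g i in carrier G for i < d
  (values at i >= d are irrelevant for words in free_words d).\<close>

definition word_image :: "('a, 'b) monoid_scheme \<Rightarrow> nat \<Rightarrow> (nat \<times> bool) list \<Rightarrow> 'a set" where
  "word_image G d w = {word_eval G w g | g. \<forall>i<d. g i \<in> carrier G}"

definition maximal_subgroup :: "'a set \<Rightarrow> ('a, 'b) monoid_scheme \<Rightarrow> bool" where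
  "maximal_subgroup H G \<longleftrightarrow> subgroup H G \<and> H \<noteq> carrier G \<and>
     (\<forall>K. subgroup K G \<and> H \<subseteq> K \<longrightarrow> K = H \<or> K = carrier G)"

definition frattini :: "('a, 'b) monoid_scheme \<Rightarrow> 'a set" where
  "frattini G = carrier G \<inter> \<Inter> {H. maximal_subgroup H G}"

end

theory Submission imports Defs begin

lemma (in group) rcos_shift:
  assumes "subgroup M G" "S \<in> rcosets M" "h \<in> carrier G"
  shows "S #> h \<in> rcosets M"
proof -
  from assms obtain a where a: "a \<in> carrier G" "S = M #> a" unfolding RCOSETS_def by auto
  have "S #> h = M #> (a \<otimes> h)" using a assms coset_mult_assoc subgroup.subset by blast
  then show ?thesis using a assms unfolding RCOSETS_def by auto
qed

lemma (in group) rcos_shift2: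
  assumes "subgroup M G" "S \<in> rcosets M" "h \<in> carrier G" "k \<in> carrier G"
  shows "S #> h #> k = S #> (h \<otimes> k)"
proof -
  from assms obtain a where a: "a \<in> carrier G" "S = M #> a" unfolding RCOSETS_def by auto
  have MG: "M \<subseteq> carrier G" using assms subgroup.subset by blast
  have "S #> h #> k = M #> (a \<otimes> h \<otimes> k)" using a assms MG coset_mult_assoc by simp
  also have "\<dots> = S #> (h \<otimes> k)" using a assms MG coset_mult_assoc m_assoc by simp
  finally show ?thesis .
qed

lemma (in group) rcoset_action:
  assumes "subgroup M G"
  shows "group_action G (rcosets M) (\<lambda>g. \<lambda>S \<in> (rcosets M). S #> inv g)"
proof -
  have bij: "(\<lambda>S \<in> (rcosets M). S #> inv g) \<in> Bij (rcosets M)" if g: "g \<in> carrier G" for g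
  proof -
    have "bij_betw (\<lambda>S. S #> inv g) (rcosets M) (rcosets M)"
    proof (rule bij_betwI[where g="\<lambda>S. S #> g"])
      show "(\<lambda>S. S #> inv g) \<in> rcosets M \<rightarrow> rcosets M" using rcos_shift assms g by auto
      show "(\<lambda>S. S #> g) \<in> rcosets M \<rightarrow> rcosets M" using rcos_shift assms g by auto
      show "S #> inv g #> g = S" if "S \<in> rcosets M" for S
      proof -
        have "S \<subseteq> carrier G" using that assms subgroup.subset unfolding RCOSETS_def r_coset_def by fastforce
        then show ?thesis using rcos_shift2[OF assms that inv_closed[OF g] g] g coset_mult_one by simp
      qed
      show "S #> g #> inv g = S" if "S \<in> rcosets M" for S
      proof -
        have "S \<subseteq> carrier G" using that assms subgroup.subset unfolding RCOSETS_def r_coset_def by fastforce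
        then show ?thesis using rcos_shift2[OF assms that g inv_closed[OF g]] g coset_mult_one by simp
      qed
    qed
    then have "bij_betw (\<lambda>S \<in> (rcosets M). S #> inv g) (rcosets M) (rcosets M)"
      using bij_betw_cong[of "rcosets M" "\<lambda>S \<in> (rcosets M). S #> inv g" "\<lambda>S. S #> inv g" "rcosets M"]
      by simp
    then show ?thesis unfolding Bij_def using restrict_extensional by blast
  qed
  have hom: "(\<lambda>g. \<lambda>S \<in> (rcosets M). S #> inv g) \<in> hom G (BijGroup (rcosets M))"
  proof (rule homI)
    fix x assume "x \<in> carrier G"
    then show "(\<lambda>S \<in> (rcosets M). S #> inv x) \<in> carrier (BijGroup (rcosets M))"
      using bij by (simp add: BijGroup_def)
  next
    fix x y assume x: "x \<in> carrier G" and y: "y \<in> carrier G"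
    have eq: "(\<lambda>S \<in> (rcosets M). S #> inv (x \<otimes> y)) =
          compose (rcosets M) (\<lambda>S \<in> (rcosets M). S #> inv x) (\<lambda>S \<in> (rcosets M). S #> inv y)"
    proof (rule ext)
      fix S
      show "(\<lambda>S \<in> (rcosets M). S #> inv (x \<otimes> y)) S =
          compose (rcosets M) (\<lambda>S \<in> (rcosets M). S #> inv x) (\<lambda>S \<in> (rcosets M). S #> inv y) S"
      proof (cases "S \<in> rcosets M")
        case True
        have "S #> inv y \<in> rcosets M" using rcos_shift[OF assms True] y by simp
        moreover have "S #> inv y #> inv x = S #> inv (x \<otimes> y)"
          using rcos_shift2[OF assms True, of "inv y" "inv x"] x y by (simp add: inv_mult_group)
        ultimately show ?thesis using True by (simp add: compose_def)
      next
        case False then show ?thesis by (simp add: compose_def)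
      qed
    qed
    show "(\<lambda>S \<in> (rcosets M). S #> inv (x \<otimes> y)) =
          (\<lambda>S \<in> (rcosets M). S #> inv x) \<otimes>\<^bsub>BijGroup (rcosets M)\<^esub> (\<lambda>S \<in> (rcosets M). S #> inv y)"
      unfolding eq using bij x y by (simp add: BijGroup_def)
  qed
  show ?thesis unfolding group_action_def group_hom_def
    using hom by (simp add: group_BijGroup group_hom_axioms.intro is_group)
qed

lemma orbits_ex: "orb \<in> orbits H E f \<Longrightarrow> \<exists>x. x \<in> E \<and> orb = orbit H f x"
  unfolding orbits_def by auto

lemma orbits_I: "x \<in> E \<Longrightarrow> orbit H f x \<in> orbits H E f"
  unfolding orbits_def by auto

lemma (in group) pgroup_normalizer_grows:
  assumes fin: "finite (carrier G)" and p: "Factorial_Ring.prime (p::nat)" and ord: "order G = p^n"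
    and M: "subgroup M G" and ne: "M \<noteq> carrier G"
  shows "\<exists>g\<in>carrier G. g \<notin> M \<and> (\<forall>m\<in>M. g \<otimes> m \<otimes> inv g \<in> M)"
proof -
  let ?H = "G\<lparr>carrier := M\<rparr>"
  let ?E = "rcosets M"
  let ?phi = "\<lambda>g. \<lambda>S \<in> (rcosets M). S #> inv g"
  have MG: "M \<subseteq> carrier G" using M subgroup.subset by blast
  interpret A: group_action ?H ?E ?phi
    using group_action.induced_action[OF rcoset_action[OF M] M] .
  have finE: "finite ?E"
  proof -
    have "?E \<subseteq> Pow (carrier G)" using MG unfolding RCOSETS_def r_coset_def by auto
    then show ?thesis by (rule finite_subset) (simp add: fin)
  qed
  have finM: "finite M" using fin MG finite_subset by blast
  have lag: "card ?E * card M = p^n" using lagrange[OF M] ord by simp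
  have "\<exists>i j. card (rcosets M) = p ^ i \<and> card M = p ^ j" by (rule prime_power_mult_nat[OF p lag])
  then obtain c a where cE: "card (rcosets M) = p ^ c" and ca: "card M = p ^ a" by blast
  have "c \<noteq> 0"
  proof
    assume "c = 0"
    then have "card M = card (carrier G)" using lag cE ord by (simp add: order_def)
    then have "M = carrier G" using MG fin card_subset_eq by blast
    then show False using ne by simp
  qed
  then have pE: "p dvd card ?E" using cE by simp
  have orb_card: "\<exists>i. card orb = p^i" if orbH: "orb \<in> orbits ?H ?E ?phi" for orb
  proof -
    obtain x where x: "x \<in> ?E" "orb = orbit ?H ?phi x" using orbits_ex[OF orbH] by blast
    have "card (orbit ?H ?phi x) * card (stabilizer ?H ?phi x) = order ?H"
      using A.orbit_stabilizer_theorem[OF x(1)] .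
    then have "card orb * card (stabilizer ?H ?phi x) = p^a" using x ca by (simp add: order_def)
    then show ?thesis using prime_power_mult_nat[OF p] by metis
  qed
  have orb_sub: "orb \<subseteq> ?E" if "orb \<in> orbits ?H ?E ?phi" for orb
    using that A.orbits_coverture by blast
  have finO: "finite (orbits ?H ?E ?phi)"
    using finE A.orbits_coverture by (metis finite_UnionD)
  define O1 where "O1 = {orb \<in> orbits ?H ?E ?phi. card orb = 1}"
  define O2 where "O2 = {orb \<in> orbits ?H ?E ?phi. card orb \<noteq> 1}"
  have sum: "(\<Sum>orb\<in>orbits ?H ?E ?phi. card orb) = card ?E"
    using A.disjoint_sum[OF finE, of "\<lambda>_. 1::nat"] by simp
  have split: "(\<Sum>orb\<in>orbits ?H ?E ?phi. card orb) = (\<Sum>orb\<in>O1. card orb) + (\<Sum>orb\<in>O2. card orb)"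
  proof -
    have "orbits ?H ?E ?phi = O1 \<union> O2" "O1 \<inter> O2 = {}" unfolding O1_def O2_def by auto
    then show ?thesis using finO by (simp add: sum.union_disjoint)
  qed
  have s1: "(\<Sum>orb\<in>O1. card orb) = card O1" unfolding O1_def by simp
  have s2: "p dvd (\<Sum>orb\<in>O2. card orb)"
  proof (rule dvd_sum)
    fix orb assume "orb \<in> O2"
    then obtain i where "card orb = p^i" "card orb \<noteq> 1" using orb_card unfolding O2_def by blast
    then show "p dvd card orb" by (cases i) auto
  qed
  have pO1: "p dvd card O1" using pE sum split s1 s2 by (metis dvd_add_left_iff)
  have ME: "M \<in> ?E" using MG rcosetsI[of M \<one>] coset_mult_one by (metis one_closed)
  have orbM: "orbit ?H ?phi M = {M}"
  proof -
    have e: "M #> inv m = M" if "m \<in> M" for m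
      using that subgroup.rcos_const[OF M is_group] subgroup.m_inv_closed[OF M] by simp
    have "{?phi g M | g. g \<in> M} = {M}"
    proof
      show "{?phi g M | g. g \<in> M} \<subseteq> {M}" using e ME by auto
      show "{M} \<subseteq> {?phi g M | g. g \<in> M}" using e ME subgroup.one_closed[OF M] by force
    qed
    then show ?thesis unfolding orbit_def by simp
  qed
  have "{M} \<in> O1" unfolding O1_def using orbits_I[OF ME, of ?H ?phi] orbM by simp
  then have "O1 \<noteq> {}" by auto
  moreover have "finite O1" using finO unfolding O1_def by auto
  ultimately have "card O1 > 0" by (simp add: card_gt_0_iff)
  then have "card O1 \<ge> p" using pO1 dvd_imp_le by blast
  moreover have "p \<ge> 2" using p prime_ge_2_nat by blast
  ultimately have "card O1 \<ge> 2" by linarith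
  then obtain orb where orb: "orb \<in> O1" "orb \<noteq> {M}"
    by (metis \<open>{M} \<in> O1\<close> \<open>finite O1\<close> card_le_Suc0_iff_eq not_less_eq_eq numeral_2_eq_2)
  have "orb \<in> orbits ?H ?E ?phi" using orb unfolding O1_def by blast
  then obtain x where x: "x \<in> ?E" "orb = orbit ?H ?phi x" using orbits_ex by blast
  have "x \<in> orb" using A.orbit_refl[OF x(1)] x by simp
  moreover have "card orb = 1" using orb unfolding O1_def by simp
  ultimately have orbx: "orb = {x}" by (metis card_1_singletonE singletonD)
  obtain g where g: "g \<in> carrier G" "x = M #> g" using x unfolding RCOSETS_def by auto
  have "g \<notin> M"
  proof
    assume "g \<in> M"
    then have "x = M" using g subgroup.rcos_const[OF M is_group] by simp
    then show False using orb orbx by simp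
  qed
  moreover have "g \<otimes> m \<otimes> inv g \<in> M" if m: "m \<in> M" for m
  proof -
    have mi: "inv m \<in> M" using subgroup.m_inv_closed[OF M m] .
    have mG: "m \<in> carrier G" using m MG by auto
    have "?phi (inv m) x \<in> orbit ?H ?phi x" unfolding orbit_def using mi by auto
    then have "?phi (inv m) x = x" using x orbx by auto
    then have "x #> m = x" using x(1) mG by simp
    then have "M #> (g \<otimes> m) = M #> g" using g coset_mult_assoc MG mG by simp
    then have "g \<otimes> m \<in> M #> g" using rcos_self[of "g \<otimes> m" M] M g mG by (metis m_closed)
    then obtain m' where m': "m' \<in> M" "g \<otimes> m = m' \<otimes> g" unfolding r_coset_def by auto
    have m'G: "m' \<in> carrier G" using m'(1) MG by blast
    have "g \<otimes> m \<otimes> inv g = m'" using m' g mG m'G by (simp add: m_assoc)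
    then show ?thesis using m' by simp
  qed
  ultimately show ?thesis using g by blast
qed


lemma (in group) cancel_h1:
  "x \<in> carrier G \<Longrightarrow> y \<in> carrier G \<Longrightarrow> x \<otimes> (inv x \<otimes> y) = y"
  by (simp add: m_assoc[symmetric])

lemma (in group) cancel_h2:
  "x \<in> carrier G \<Longrightarrow> y \<in> carrier G \<Longrightarrow> inv x \<otimes> (x \<otimes> y) = y"
  by (simp add: m_assoc[symmetric])


lemma (in group) maximal_normal:
  assumes fin: "finite (carrier G)" and p: "Factorial_Ring.prime (p::nat)" and ord: "order G = p^n"
    and mx: "maximal_subgroup M G"
  shows "\<forall>h\<in>carrier G. \<forall>m\<in>M. h \<otimes> m \<otimes> inv h \<in> M"
proof -
  have M: "subgroup M G" and ne: "M \<noteq> carrier G" using mx unfolding maximal_subgroup_def by auto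
  have MG: "M \<subseteq> carrier G" using M subgroup.subset by blast
  obtain g where g: "g \<in> carrier G" "g \<notin> M" "\<forall>m\<in>M. g \<otimes> m \<otimes> inv g \<in> M"
    using pgroup_normalizer_grows[OF fin p ord M ne] by blast
  have finM: "finite M" using fin MG finite_subset by blast
  have img: "(\<lambda>m. g \<otimes> m \<otimes> inv g) ` M = M"
  proof (rule endo_inj_surj[OF finM])
    show "(\<lambda>m. g \<otimes> m \<otimes> inv g) ` M \<subseteq> M" using g by auto
    show "inj_on (\<lambda>m. g \<otimes> m \<otimes> inv g) M"
    proof (rule inj_onI)
      fix x y assume xy: "x \<in> M" "y \<in> M" "g \<otimes> x \<otimes> inv g = g \<otimes> y \<otimes> inv g"
      have "x \<in> carrier G" "y \<in> carrier G" using xy MG by auto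
      then show "x = y" using conjugation_is_inj[OF g(1) _ _ xy(3)] by simp
    qed
  qed
  have g2: "inv g \<otimes> m \<otimes> g \<in> M" if "m \<in> M" for m
  proof -
    have "m \<in> (\<lambda>m. g \<otimes> m \<otimes> inv g) ` M" using img that by simp
    then obtain m' where m': "m' \<in> M" "m = g \<otimes> m' \<otimes> inv g" by (rule imageE)
    have m'G: "m' \<in> carrier G" using m'(1) MG by blast
    have "inv g \<otimes> m \<otimes> g = m'" using m' g(1) m'G by (simp add: m_assoc cancel_h2)
    then show ?thesis using m' by simp
  qed
  define N where "N = {h \<in> carrier G. \<forall>m\<in>M. h \<otimes> m \<otimes> inv h \<in> M \<and> inv h \<otimes> m \<otimes> h \<in> M}"
  have "subgroup N G"
  proof (rule subgroupI)
    show "N \<subseteq> carrier G" unfolding N_def by auto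
    have "\<one> \<in> N" unfolding N_def using MG by (auto simp: subsetD)
    then show "N \<noteq> {}" by blast
    fix a assume "a \<in> N"
    then show "inv a \<in> N" unfolding N_def by auto
  next
    fix a b assume a: "a \<in> N" and b: "b \<in> N"
    have aG: "a \<in> carrier G" and bG: "b \<in> carrier G" using a b unfolding N_def by auto
    have "a \<otimes> b \<otimes> m \<otimes> inv (a \<otimes> b) \<in> M \<and> inv (a \<otimes> b) \<otimes> m \<otimes> (a \<otimes> b) \<in> M" if m: "m \<in> M" for m
    proof -
      have mG: "m \<in> carrier G" using m MG by auto
      have e1: "a \<otimes> b \<otimes> m \<otimes> inv (a \<otimes> b) = a \<otimes> (b \<otimes> m \<otimes> inv b) \<otimes> inv a"
        using aG bG mG by (simp add: inv_mult_group m_assoc)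
      have e2: "inv (a \<otimes> b) \<otimes> m \<otimes> (a \<otimes> b) = inv b \<otimes> (inv a \<otimes> m \<otimes> a) \<otimes> b"
        using aG bG mG by (simp add: inv_mult_group m_assoc)
      show ?thesis unfolding e1 e2 using a b m unfolding N_def by auto
    qed
    then show "a \<otimes> b \<in> N" unfolding N_def using aG bG by auto
  qed
  moreover have "M \<subseteq> N"
    unfolding N_def using M MG by (auto intro: subgroup.m_closed subgroup.m_inv_closed)
  moreover have "g \<in> N" unfolding N_def using g g2 by auto
  ultimately have "N = carrier G" using mx g unfolding maximal_subgroup_def by blast
  then show ?thesis unfolding N_def by auto
qed


lemma (in group) maximal_cyclic:
  assumes fin: "finite (carrier G)" and p: "Factorial_Ring.prime (p::nat)" and ord: "order G = p^n"
    and mx: "maximal_subgroup M G"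
  shows "\<exists>b\<in>carrier G. b [^] p \<in> M \<and> (\<forall>x\<in>carrier G. \<exists>k::int. \<exists>m\<in>M. x = b [^] k \<otimes> m)"
proof -
  have M: "subgroup M G" and ne: "M \<noteq> carrier G" using mx unfolding maximal_subgroup_def by auto
  have MG: "M \<subseteq> carrier G" using M subgroup.subset by blast
  have nrm: "\<forall>h\<in>carrier G. \<forall>m\<in>M. h \<otimes> m \<otimes> inv h \<in> M" using maximal_normal[OF fin p ord mx] .
  obtain a where a: "a \<in> carrier G" "a \<notin> M" using ne MG by blast
  have ex: "a [^] (p^n) \<in> M" using pow_order_eq_1[OF a(1)] ord subgroup.one_closed[OF M] by simp
  define i where "i = (LEAST i. a [^] (p^i) \<in> M)"
  have i1: "a [^] (p^i) \<in> M" unfolding i_def by (rule LeastI[of _ n], rule ex)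
  have i0: "i \<noteq> 0"
  proof
    assume "i = 0" then show False using i1 a by simp
  qed
  define b where "b = a [^] (p^(i - 1))"
  have bG: "b \<in> carrier G" unfolding b_def using a by simp
  have bM: "b \<notin> M" unfolding b_def using i0 not_less_Least[of "i - 1"] unfolding i_def
    by (metis diff_less less_one not_gr_zero)
  have bp: "b [^] p \<in> M"
  proof -
    have "b [^] p = a [^] (p^(i - 1) * p)" unfolding b_def using a nat_pow_pow by simp
    also have "p^(i - 1) * p = p^i" using i0 by (metis Suc_pred' bot_nat_0.not_eq_extremum power_Suc2)
    finally show ?thesis using i1 by simp
  qed
  define K where "K = {y. \<exists>k::int. \<exists>m\<in>M. y = b [^] k \<otimes> m}"
  have "subgroup K G"
  proof (rule subgroupI)
    show "K \<subseteq> carrier G" unfolding K_def using bG MG by auto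
    show "K \<noteq> {}" unfolding K_def using subgroup.one_closed[OF M] bG by auto
  next
    fix y assume "y \<in> K"
    then obtain k :: int and m where km: "m \<in> M" "y = b [^] k \<otimes> m" unfolding K_def by blast
    have mG: "m \<in> carrier G" using km MG by auto
    have "inv y = b [^] (-k) \<otimes> (b [^] k \<otimes> inv m \<otimes> inv (b [^] k))"
      using km bG mG by (simp add: inv_mult_group int_pow_neg m_assoc cancel_h2)
    moreover have "b [^] k \<otimes> inv m \<otimes> inv (b [^] k) \<in> M"
      by (rule nrm[rule_format, OF int_pow_closed[OF bG] subgroup.m_inv_closed[OF M km(1)]])
    ultimately show "inv y \<in> K" unfolding K_def by blast
  next
    fix y z assume "y \<in> K" "z \<in> K"
    then obtain k l :: int and m m' where km: "m \<in> M" "y = b [^] k \<otimes> m" "m' \<in> M" "z = b [^] l \<otimes> m'"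
      unfolding K_def by blast
    have mG: "m \<in> carrier G" "m' \<in> carrier G" using km MG by auto
    have "y \<otimes> z = b [^] (k + l) \<otimes> ((inv (b [^] l) \<otimes> m \<otimes> inv (inv (b [^] l))) \<otimes> m')"
      using km bG mG by (simp add: int_pow_mult m_assoc cancel_h1)
    moreover have "(inv (b [^] l) \<otimes> m \<otimes> inv (inv (b [^] l))) \<otimes> m' \<in> M"
      by (rule subgroup.m_closed[OF M nrm[rule_format, OF inv_closed[OF int_pow_closed[OF bG]] km(1)] km(3)])
    ultimately show "y \<otimes> z \<in> K" unfolding K_def by blast
  qed
  moreover have "M \<subseteq> K" unfolding K_def
  proof
    fix m assume "m \<in> M" then show "m \<in> {y. \<exists>k::int. \<exists>m\<in>M. y = b [^] k \<otimes> m}"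
      using MG by (auto intro!: exI[of _ 0] bexI[of _ m])
  qed
  moreover have "b \<in> K" unfolding K_def using bG subgroup.one_closed[OF M]
    by (auto intro!: exI[of _ 1] bexI[of _ \<one>])
  ultimately have "K = carrier G" using mx bM unfolding maximal_subgroup_def by blast
  then show ?thesis using bG bp unfolding K_def by blast
qed


fun wsum :: "(nat \<Rightarrow> int) \<Rightarrow> (nat \<times> bool) list \<Rightarrow> int" where
  "wsum k [] = 0"
| "wsum k ((i, c) # w) = (if c then k i else - k i) + wsum k w"

lemma wsum_lin:
  "w \<in> free_words d \<Longrightarrow> wsum k w = (\<Sum>i<d. k i * wsum (\<lambda>j. if j = i then 1 else 0) w)"
proof (induction w)
  case Nil then show ?case by simp
next
  case (Cons a w)
  obtain i c where a: "a = (i, c)" by fastforce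
  have w: "w \<in> free_words d" and id: "i < d" using Cons.prems a unfolding free_words_def by auto
  have "(\<Sum>j<d. k j * wsum (\<lambda>l. if l = j then 1 else 0) (a # w))
      = (\<Sum>j<d. k j * (if c then (if i = j then 1 else 0) else - (if i = j then 1 else 0))) + 
        (\<Sum>j<d. k j * wsum (\<lambda>l. if l = j then 1 else 0) w)"
    unfolding a by (simp add: sum.distrib distrib_left)
  also have "(\<Sum>j<d. k j * (if c then (if i = j then 1 else 0) else - (if i = j then 1 else 0))) =
     (if c then k i else - k i)"
    using id by (cases c) (auto simp: if_distrib cong: if_cong)
  finally show ?case using Cons.IH[OF w] a by simp
qed

lemma (in group) word_eval_closed:
  "w \<in> free_words d \<Longrightarrow> \<forall>i<d. g i \<in> carrier G \<Longrightarrow> word_eval G w g \<in> carrier G"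
  by (induction w) (auto simp: free_words_def)

lemma (in group) word_eval_single:
  assumes "x \<in> carrier G"
  shows "word_eval G w (\<lambda>j. if j = i then x else \<one>) = x [^] wsum (\<lambda>j. if j = i then 1 else 0) w"
proof (induction w)
  case Nil then show ?case by simp
next
  case (Cons a w)
  obtain j c where a: "a = (j, c)" by fastforce
  show ?case using Cons assms unfolding a
    by (auto simp: int_pow_mult int_pow_neg)
qed

lemma (in group) cancel_helper:
  "x \<in> carrier G \<Longrightarrow> y \<in> carrier G \<Longrightarrow> x \<otimes> (inv x \<otimes> y) = y"
  by (simp add: m_assoc[symmetric])

lemma (in group) cancel_helper2:
  "x \<in> carrier G \<Longrightarrow> y \<in> carrier G \<Longrightarrow> inv x \<otimes> (x \<otimes> y) = y"
  by (simp add: m_assoc[symmetric])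

lemma (in group) word_eval_coset:
  assumes "w \<in> free_words d" and bG: "b \<in> carrier G" and M: "subgroup M G"
    and nrm: "\<forall>h\<in>carrier G. \<forall>m\<in>M. h \<otimes> m \<otimes> inv h \<in> M"
    and g: "\<forall>i<d. m i \<in> M \<and> g i = b [^] k i \<otimes> m i"
  shows "\<exists>m'\<in>M. word_eval G w g = b [^] wsum k w \<otimes> m'"
  using assms(1)
proof (induction w)
  case Nil then show ?case using subgroup.one_closed[OF M] bG by (auto intro!: bexI[of _ \<one>])
next
  case (Cons a w)
  obtain i c where a: "a = (i, c)" by fastforce
  have w: "w \<in> free_words d" and id: "i < d" using Cons.prems a unfolding free_words_def by auto
  obtain m' where m': "m' \<in> M" "word_eval G w g = b [^] wsum k w \<otimes> m'" using Cons.IH[OF w] by blast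
  have MG: "M \<subseteq> carrier G" using M subgroup.subset by blast
  have mi: "m i \<in> M" "g i = b [^] k i \<otimes> m i" using g id by auto
  have miG: "m i \<in> carrier G" "m' \<in> carrier G" using mi m' MG by auto
  let ?s = "wsum k w"
  show ?case
  proof (cases c)
    case True
    have "word_eval G (a # w) g = b [^] (k i + ?s) \<otimes> ((inv (b [^] ?s) \<otimes> m i \<otimes> inv (inv (b [^] ?s))) \<otimes> m')"
      using a True mi m' miG bG by (simp add: int_pow_mult m_assoc cancel_helper)
    moreover have "(inv (b [^] ?s) \<otimes> m i \<otimes> inv (inv (b [^] ?s))) \<otimes> m' \<in> M"
      by (rule subgroup.m_closed[OF M nrm[rule_format, OF inv_closed[OF int_pow_closed[OF bG]] mi(1)] m'(1)])
    ultimately show ?thesis using a True by auto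
  next
    case False
    have e: "b [^] (- k i + ?s) = inv (b [^] k i) \<otimes> b [^] ?s"
      using int_pow_mult[OF bG, of "- k i" ?s] int_pow_neg[OF bG, of "k i"] by simp
    have "word_eval G (a # w) g = b [^] (- k i + ?s) \<otimes> ((inv (b [^] ?s) \<otimes> (b [^] k i \<otimes> inv (m i) \<otimes> inv (b [^] k i)) \<otimes> inv (inv (b [^] ?s))) \<otimes> m')"
      unfolding e using a False mi m' miG bG by (simp add: m_assoc inv_mult_group cancel_helper cancel_helper2)
    moreover have "(inv (b [^] ?s) \<otimes> (b [^] k i \<otimes> inv (m i) \<otimes> inv (b [^] k i)) \<otimes> inv (inv (b [^] ?s))) \<otimes> m' \<in> M"
      by (rule subgroup.m_closed[OF M nrm[rule_format, OF inv_closed[OF int_pow_closed[OF bG]]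
            nrm[rule_format, OF int_pow_closed[OF bG] subgroup.m_inv_closed[OF M mi(1)]]] m'(1)])
    ultimately show ?thesis using a False by auto
  qed
qed


lemma (in group) pow_surj:
  assumes p: "Factorial_Ring.prime (p::nat)" and ord: "order G = p^n"
    and e: "\<not> int p dvd e" and y: "y \<in> carrier G"
  shows "\<exists>x\<in>carrier G. x [^] e = y"
proof -
  have "coprime (int p) e" using e p by (simp add: prime_imp_coprime)
  then have "coprime e (int p ^ n)" by (simp add: coprime_commute)
  then have "gcd e (int p ^ n) = 1" by simp
  then obtain u v where uv: "u * e + v * (int p ^ n) = 1" using bezout_int by metis
  have yo: "y [^] (int p ^ n) = \<one>"
    using pow_order_eq_1[OF y] ord int_pow_int[of G y "p^n"] by simp
  have "(y [^] u) [^] e = y [^] (u * e)" using int_pow_pow[OF y] by simp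
  also have "u * e = 1 + (int p ^ n) * (- v)" using uv by (simp add: algebra_simps)
  also have "y [^] (1 + (int p ^ n) * (- v)) = y"
  proof -
    have h1: "y [^] (1 + (int p ^ n) * (- v)) = y [^] (1::int) \<otimes> y [^] ((int p ^ n) * (- v))"
      by (rule int_pow_mult[OF y])
    have h2: "y [^] ((int p ^ n) * (- v)) = (y [^] (int p ^ n)) [^] (-v)"
      by (rule int_pow_pow[OF y, symmetric])
    show ?thesis unfolding h1 h2 yo using y by simp
  qed
  finally show ?thesis using y by blast
qed

lemma (in group) lemma3p1_aux:
  fixes p d :: nat and w :: "(nat \<times> bool) list"
  assumes "finite (carrier G)"
    and "Factorial_Ring.prime p" and "\<exists>n. order G = p ^ n"
    and "d \<ge> 1" and "w \<in> free_words d"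
    and "word_image G d w \<noteq> carrier G"
  shows "word_image G d w \<subseteq> frattini G"
proof -
  obtain n where ord: "order G = p ^ n" using assms(3) by blast
  have fin: "finite (carrier G)" and p: "Factorial_Ring.prime p" and w: "w \<in> free_words d"
    using assms by auto
  have sub: "word_image G d w \<subseteq> carrier G"
    unfolding word_image_def using word_eval_closed[OF w] by auto
  have dv: "int p dvd wsum (\<lambda>j. if j = i then 1 else 0) w" if i: "i < d" for i
  proof (rule ccontr)
    assume nd: "\<not> int p dvd wsum (\<lambda>j. if j = i then 1 else 0) w"
    have "carrier G \<subseteq> word_image G d w"
    proof
      fix y assume y: "y \<in> carrier G"
      obtain x where x: "x \<in> carrier G" "x [^] wsum (\<lambda>j. if j = i then 1 else 0) w = y"
        using pow_surj[OF p ord nd y] by blast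
      have "word_eval G w (\<lambda>j. if j = i then x else \<one>) = y"
        using word_eval_single[OF x(1)] x(2) by simp
      moreover have "\<forall>j<d. (\<lambda>j. if j = i then x else \<one>) j \<in> carrier G" using x by auto
      ultimately show "y \<in> word_image G d w" unfolding word_image_def by blast
    qed
    then show False using sub assms(6) by blast
  qed
  show ?thesis
  proof
    fix y assume yw: "y \<in> word_image G d w"
    then obtain g where g: "\<forall>i<d. g i \<in> carrier G" "y = word_eval G w g"
      unfolding word_image_def by blast
    have yG: "y \<in> carrier G" using yw sub by blast
    have "y \<in> M" if mx: "maximal_subgroup M G" for M
    proof -
      have M: "subgroup M G" using mx unfolding maximal_subgroup_def by auto
      have nrm: "\<forall>h\<in>carrier G. \<forall>m\<in>M. h \<otimes> m \<otimes> inv h \<in> M" using maximal_normal[OF fin p ord mx] .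
      obtain b where b: "b \<in> carrier G" "b [^] p \<in> M"
        and dec: "\<forall>x\<in>carrier G. \<exists>k::int. \<exists>m\<in>M. x = b [^] k \<otimes> m"
        using maximal_cyclic[OF fin p ord mx] by blast
      define kk where "kk i = (SOME k::int. \<exists>m\<in>M. g i = b [^] k \<otimes> m)" for i
      define mm where "mm i = (SOME m. m \<in> M \<and> g i = b [^] kk i \<otimes> m)" for i
      have km: "\<forall>i<d. mm i \<in> M \<and> g i = b [^] kk i \<otimes> mm i"
      proof (intro allI impI)
        fix i assume "i < d"
        then have "\<exists>k::int. \<exists>m\<in>M. g i = b [^] k \<otimes> m" using dec g by blast
        then have "\<exists>m\<in>M. g i = b [^] kk i \<otimes> m" unfolding kk_def by (rule someI_ex)
        then have "\<exists>m. m \<in> M \<and> g i = b [^] kk i \<otimes> m" by blast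
        then show "mm i \<in> M \<and> g i = b [^] kk i \<otimes> mm i" unfolding mm_def by (rule someI_ex)
      qed
      obtain m' where m': "m' \<in> M" "word_eval G w g = b [^] wsum kk w \<otimes> m'"
        using word_eval_coset[OF w b(1) M nrm km] by blast
      have "int p dvd wsum kk w" unfolding wsum_lin[OF w, of kk]
        by (rule dvd_sum) (simp add: dv)
      then obtain t where t: "wsum kk w = int p * t" by blast
      have "b [^] wsum kk w = (b [^] p) [^] t"
        unfolding t using int_pow_pow[OF b(1), of "int p" t] int_pow_int[of G b p] by simp
      then have "b [^] wsum kk w \<in> M" using subgroup_int_pow_closed[OF M b(2)] by simp
      then show "y \<in> M" using g(2) m' subgroup.m_closed[OF M] by simp
    qed
    then show "y \<in> frattini G" unfolding frattini_def using yG by blast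
  qed
qed

theorem lemma3p1:
  fixes G :: "('a, 'b) monoid_scheme" and p d :: nat and w :: "(nat \<times> bool) list"
  assumes "group G" and "finite (carrier G)"
    and "Factorial_Ring.prime p" and "\<exists>n. order G = p ^ n"
    and "d \<ge> 1" and "w \<in> free_words d"
    and "word_image G d w \<noteq> carrier G"
  shows "word_image G d w \<subseteq> frattini G"
  using group.lemma3p1_aux[OF assms(1) assms(2-7)] .

end
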